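(* Let $(U,g_1)$ have constant curvature $K_1$ and $(V,g_2)$ be flat, and let $f$ be a function on $U$. Suppose $u^1,\dots,u^p$ are functions on $U$ with $g_1^*(du^i,du^j)=G_1^{ij}-K_1u^iu^j$ for a constant nondegenerate matrix $G_1$, that $f=u^1$, that $G_1^{1j}=0$ for all $j\ne p$ and $G_1^{1p}=b\neq0$, and that $g_1^*(df,df)=-K_1f^2$. Suppose $v^1,\dots,v^{n_2}$ are functions on $V$ with $g_2^*(dv^k,dv^m)=G_2^{km}$ constant and nondegenerate, and $\phi$ is a function on $V$ with $g_2^*(d\phi,dv^i)=v^i$ for all $i$ and $g_2^*(d\phi,d\phi)=2\phi$. Let $g=g_1+f^{-2}g_2$ on $U\times V$ (contravariant warped product). Then the functions $w=(u^1,\dots,u^{p-1},\ \tilde u^p,\ fv^1,\dots,fv^{n_2})$ with $\tilde u^p=u^p-b\,f\phi$ satisfy $g^*(dw^a,dw^b)=G^{ab}-K_1w^aw^b$ with $G=\begin{pmatrix}G_1&0\\0&G_2\end{pmatrix}$; in particular they form (generalised) flat coordinates for $g$.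
   Context: $g_1,g_2$ are treated as contravariant metrics and $g^*$ (resp. $g_i^*$) denotes the pairing of covectors; functions on $U$ or $V$ are pulled back to $U\times V$. The contravariant metric $g_1+f^{-2}g_2$ acts on covectors by $g^*(\omega,\eta)=g_1^*(\omega_U,\eta_U)+f^{-2}g_2^*(\omega_V,\eta_V)$. *)

theory Defs
  imports "HOL-Analysis.Analysis"
begin

text \<open>Local coordinates: a manifold chart is an open set of real^'n.
  A contravariant metric is a matrix-valued function g with g x $ i $ j = g^{ij}(x).\<close>

definition partial :: "'n::finite \<Rightarrow> (real^'n \<Rightarrow> real) \<Rightarrow> real^'n \<Rightarrow> real" where
  "partial i h x = frechet_derivative h (at x) (axis i 1)"

definition dcov :: "(real^'n::finite \<Rightarrow> real) \<Rightarrow> real^'n \<Rightarrow> real^'n" where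
  "dcov h x = (\<chi> i. partial i h x)"

definition pair_cov :: "(real^'n::finite \<Rightarrow> real^'n^'n) \<Rightarrow> real^'n \<Rightarrow> real^'n \<Rightarrow> real^'n \<Rightarrow> real" where
  "pair_cov g x \<omega> \<eta> = (\<Sum>i\<in>UNIV. \<Sum>j\<in>UNIV. g x $ i $ j * \<omega> $ i * \<eta> $ j)"

fun partials_iter :: "'n::finite list \<Rightarrow> (real^'n \<Rightarrow> real) \<Rightarrow> real^'n \<Rightarrow> real" where
  "partials_iter [] h = h"
| "partials_iter (i # is) h = partial i (partials_iter is h)"

definition smooth_on :: "(real^'n::finite) set \<Rightarrow> (real^'n \<Rightarrow> real) \<Rightarrow> bool" where
  "smooth_on U h \<longleftrightarrow> (\<forall>is. \<forall>x\<in>U. partials_iter is h differentiable (at x))"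

definition contravariant_metric :: "(real^'n::finite) set \<Rightarrow> (real^'n \<Rightarrow> real^'n^'n) \<Rightarrow> bool" where
  "contravariant_metric U g \<longleftrightarrow> open U \<and>
     (\<forall>x\<in>U. transpose (g x) = g x \<and> invertible (g x)) \<and>
     (\<forall>i j. smooth_on U (\<lambda>z. g z $ i $ j))"

definition lower :: "(real^'n::finite \<Rightarrow> real^'n^'n) \<Rightarrow> real^'n \<Rightarrow> real^'n^'n" where
  "lower g x = matrix_inv (g x)"

definition christoffel :: "(real^'n::finite \<Rightarrow> real^'n^'n) \<Rightarrow> 'n \<Rightarrow> 'n \<Rightarrow> 'n \<Rightarrow> real^'n \<Rightarrow> real" where
  "christoffel g k i j x = (1/2) * (\<Sum>l\<in>UNIV. g x $ k $ l *
      (partial i (\<lambda>z. lower g z $ j $ l) x + partial j (\<lambda>z. lower g z $ i $ l) x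
       - partial l (\<lambda>z. lower g z $ i $ j) x))"

text \<open>riemann g l i j k x = (R(d_j,d_k) d_i)^l, with R(X,Y)Z = nabla_X nabla_Y Z - nabla_Y nabla_X Z - nabla_[X,Y] Z.\<close>
definition riemann :: "(real^'n::finite \<Rightarrow> real^'n^'n) \<Rightarrow> 'n \<Rightarrow> 'n \<Rightarrow> 'n \<Rightarrow> 'n \<Rightarrow> real^'n \<Rightarrow> real" where
  "riemann g l i j k x =
     partial j (christoffel g l k i) x - partial k (christoffel g l j i) x
     + (\<Sum>m\<in>UNIV. christoffel g l j m x * christoffel g m k i x
                 - christoffel g l k m x * christoffel g m j i x)"

definition constant_curvature :: "(real^'n::finite) set \<Rightarrow> (real^'n \<Rightarrow> real^'n^'n) \<Rightarrow> real \<Rightarrow> bool" where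
  "constant_curvature U g K \<longleftrightarrow> contravariant_metric U g \<and>
     (\<forall>x\<in>U. \<forall>l i j k. riemann g l i j k x =
        K * (lower g x $ k $ i * (if l = j then 1 else 0) - lower g x $ j $ i * (if l = k then 1 else 0)))"

definition flat :: "(real^'n::finite) set \<Rightarrow> (real^'n \<Rightarrow> real^'n^'n) \<Rightarrow> bool" where
  "flat U g \<longleftrightarrow> constant_curvature U g 0"

definition nondegenerate :: "nat \<Rightarrow> (nat \<Rightarrow> nat \<Rightarrow> real) \<Rightarrow> bool" where
  "nondegenerate n G \<longleftrightarrow> (\<forall>c. (\<forall>j\<in>{1..n}. (\<Sum>i=1..n. c i * G i j) = 0) \<longrightarrow> (\<forall>i\<in>{1..n}. c i = 0))"

definition dU :: "((real^'a::finite) \<times> (real^'b::finite) \<Rightarrow> real) \<Rightarrow> real^'a \<Rightarrow> real^'b \<Rightarrow> real^'a" where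
  "dU F x y = dcov (\<lambda>x'. F (x', y)) x"

definition dV :: "((real^'a::finite) \<times> (real^'b::finite) \<Rightarrow> real) \<Rightarrow> real^'a \<Rightarrow> real^'b \<Rightarrow> real^'b" where
  "dV F x y = dcov (\<lambda>y'. F (x, y')) y"

definition warped_pair ::
  "(real^'a::finite \<Rightarrow> real^'a^'a) \<Rightarrow> (real^'b::finite \<Rightarrow> real^'b^'b) \<Rightarrow> (real^'a \<Rightarrow> real)
   \<Rightarrow> ((real^'a) \<times> (real^'b) \<Rightarrow> real) \<Rightarrow> ((real^'a) \<times> (real^'b) \<Rightarrow> real) \<Rightarrow> real^'a \<Rightarrow> real^'b \<Rightarrow> real" where
  "warped_pair g1 g2 f F H x y =
     pair_cov g1 x (dU F x y) (dU H x y) + (1 / (f x)^2) * pair_cov g2 y (dV F x y) (dV H x y)"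

definition warped_coords ::
  "nat \<Rightarrow> (nat \<Rightarrow> real^'a::finite \<Rightarrow> real) \<Rightarrow> (real^'a \<Rightarrow> real) \<Rightarrow> real \<Rightarrow> (real^'b::finite \<Rightarrow> real)
   \<Rightarrow> (nat \<Rightarrow> real^'b \<Rightarrow> real) \<Rightarrow> nat \<Rightarrow> (real^'a) \<times> (real^'b) \<Rightarrow> real" where
  "warped_coords p u f b \<phi> v a = (\<lambda>(x, y).
     if a < p then u a x
     else if a = p then u p x - b * f x * \<phi> y
     else f x * v (a - p) y)"

definition block_matrix :: "nat \<Rightarrow> (nat \<Rightarrow> nat \<Rightarrow> real) \<Rightarrow> (nat \<Rightarrow> nat \<Rightarrow> real) \<Rightarrow> nat \<Rightarrow> nat \<Rightarrow> real" where
  "block_matrix p G1 G2 a c =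
     (if a \<le> p \<and> c \<le> p then G1 a c
      else if p < a \<and> p < c then G2 (a - p) (c - p) else 0)"

end

theory Submission
  imports Defs
begin


lemma dcov_has: "(h has_derivative h') (at x) \<Longrightarrow> dcov h x = (\<chi> i. h' (axis i 1))"
  unfolding dcov_def partial_def using frechet_derivative_at by metis

lemma dcov_const: "dcov (\<lambda>z. c) x = 0"
  using dcov_has[OF has_derivative_const] by (simp add: vec_eq_iff)

lemma dcov_lin:
  assumes "h differentiable at x" "k differentiable at x"
  shows "dcov (\<lambda>z. \<alpha> * h z + \<beta> * k z) x = \<alpha> *\<^sub>R dcov h x + \<beta> *\<^sub>R dcov k x"
proof -
  have H: "(h has_derivative frechet_derivative h (at x)) (at x)" "(k has_derivative frechet_derivative k (at x)) (at x)"
    using assms frechet_derivative_works by blast+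
  have "((\<lambda>z. \<alpha> * h z + \<beta> * k z) has_derivative (\<lambda>v. \<alpha> * frechet_derivative h (at x) v + \<beta> * frechet_derivative k (at x) v)) (at x)"
    by (intro derivative_intros H)
  from dcov_has[OF this] show ?thesis
    by (simp add: vec_eq_iff dcov_def partial_def)
qed

lemma dcov_scale:
  assumes "h differentiable at x"
  shows "dcov (\<lambda>z. \<alpha> * h z) x = \<alpha> *\<^sub>R dcov h x"
  using dcov_lin[OF assms assms, of \<alpha> 0] by simp

lemma dcov_local:
  assumes "open S" "x \<in> S" "\<And>z. z \<in> S \<Longrightarrow> h z = k z" "k differentiable at x"
  shows "dcov h x = dcov k x"
proof -
  have K: "(k has_derivative frechet_derivative k (at x)) (at x)" using assms frechet_derivative_works by blast
  have "(h has_derivative frechet_derivative k (at x)) (at x)"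
    by (rule has_derivative_transform_within_open[OF K assms(1,2)]) (use assms(3) in auto)
  from dcov_has[OF this] dcov_has[OF K] show ?thesis by simp
qed

lemma pair_add_l: "pair_cov g x (\<omega> + \<omega>') \<eta> = pair_cov g x \<omega> \<eta> + pair_cov g x \<omega>' \<eta>"
  unfolding pair_cov_def by (simp add: algebra_simps sum.distrib)
lemma pair_add_r: "pair_cov g x \<eta> (\<omega> + \<omega>') = pair_cov g x \<eta> \<omega> + pair_cov g x \<eta> \<omega>'"
  unfolding pair_cov_def by (simp add: algebra_simps sum.distrib)
lemma pair_diff_l: "pair_cov g x (\<omega> - \<omega>') \<eta> = pair_cov g x \<omega> \<eta> - pair_cov g x \<omega>' \<eta>"
  unfolding pair_cov_def by (simp add: algebra_simps sum_subtractf)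
lemma pair_diff_r: "pair_cov g x \<eta> (\<omega> - \<omega>') = pair_cov g x \<eta> \<omega> - pair_cov g x \<eta> \<omega>'"
  unfolding pair_cov_def by (simp add: algebra_simps sum_subtractf)
lemma pair_scale_l: "pair_cov g x (c *\<^sub>R \<omega>) \<eta> = c * pair_cov g x \<omega> \<eta>"
  unfolding pair_cov_def by (simp add: algebra_simps sum_distrib_left)
lemma pair_scale_r: "pair_cov g x \<eta> (c *\<^sub>R \<omega>) = c * pair_cov g x \<eta> \<omega>"
  unfolding pair_cov_def by (simp add: algebra_simps sum_distrib_left)
lemma pair_zero_l: "pair_cov g x 0 \<eta> = 0"
  unfolding pair_cov_def by simp
lemma pair_zero_r: "pair_cov g x \<eta> 0 = 0"
  unfolding pair_cov_def by simp
lemma pair_sym: "transpose (g x) = g x \<Longrightarrow> pair_cov g x \<omega> \<eta> = pair_cov g x \<eta> \<omega>"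
  unfolding pair_cov_def
proof -
  assume T: "transpose (g x) = g x"
  have s: "g x $ i $ j = g x $ j $ i" for i j
    using arg_cong[OF T, of "\<lambda>M. M $ i $ j"] by (simp add: transpose_def)
  show "(\<Sum>i\<in>UNIV. \<Sum>j\<in>UNIV. g x $ i $ j * \<omega> $ i * \<eta> $ j) = (\<Sum>i\<in>UNIV. \<Sum>j\<in>UNIV. g x $ i $ j * \<eta> $ i * \<omega> $ j)"
    by (subst sum.swap) (simp add: s mult.commute mult.left_commute)
qed

lemma pair_neg_l: "pair_cov g x (- \<omega>) \<eta> = - pair_cov g x \<omega> \<eta>"
  unfolding pair_cov_def by (simp add: sum_negf)
lemma pair_neg_r: "pair_cov g x \<eta> (- \<omega>) = - pair_cov g x \<eta> \<omega>"
  unfolding pair_cov_def by (simp add: sum_negf)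

lemmas pair_simps = pair_neg_l pair_neg_r pair_add_l pair_add_r pair_diff_l pair_diff_r pair_scale_l pair_scale_r pair_zero_l pair_zero_r


theorem proposition4p2:
  fixes U :: "(real^'a::finite) set" and V :: "(real^'b::finite) set"
    and g1 :: "real^'a \<Rightarrow> real^'a^'a" and g2 :: "real^'b \<Rightarrow> real^'b^'b"
    and K1 b :: real and f :: "real^'a \<Rightarrow> real"
    and p n2 :: nat and u :: "nat \<Rightarrow> real^'a \<Rightarrow> real" and G1 G2 :: "nat \<Rightarrow> nat \<Rightarrow> real"
    and v :: "nat \<Rightarrow> real^'b \<Rightarrow> real" and \<phi> :: "real^'b \<Rightarrow> real"
  assumes curv1: "constant_curvature U g1 K1"
    and flat2: "flat V g2"
    and f_smooth: "smooth_on U f" and f_nz: "\<forall>x\<in>U. f x \<noteq> 0"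
    and p_pos: "1 \<le> p"
    and u_smooth: "\<forall>i\<in>{1..p}. smooth_on U (u i)"
    and u_gram: "\<forall>i\<in>{1..p}. \<forall>j\<in>{1..p}. \<forall>x\<in>U.
        pair_cov g1 x (dcov (u i) x) (dcov (u j) x) = G1 i j - K1 * u i x * u j x"
    and G1_nd: "nondegenerate p G1"
    and f_u1: "\<forall>x\<in>U. f x = u 1 x"
    and G1_row: "\<forall>j\<in>{1..p}. j \<noteq> p \<longrightarrow> G1 1 j = 0"
    and G1_1p: "G1 1 p = b" and b_nz: "b \<noteq> 0"
    and f_norm: "\<forall>x\<in>U. pair_cov g1 x (dcov f x) (dcov f x) = - K1 * (f x)^2"
    and v_smooth: "\<forall>k\<in>{1..n2}. smooth_on V (v k)"
    and v_gram: "\<forall>k\<in>{1..n2}. \<forall>m\<in>{1..n2}. \<forall>y\<in>V.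
        pair_cov g2 y (dcov (v k) y) (dcov (v m) y) = G2 k m"
    and G2_nd: "nondegenerate n2 G2"
    and phi_smooth: "smooth_on V \<phi>"
    and phi_v: "\<forall>i\<in>{1..n2}. \<forall>y\<in>V. pair_cov g2 y (dcov \<phi> y) (dcov (v i) y) = v i y"
    and phi_norm: "\<forall>y\<in>V. pair_cov g2 y (dcov \<phi> y) (dcov \<phi> y) = 2 * \<phi> y"
  shows "\<forall>a\<in>{1..p+n2}. \<forall>c\<in>{1..p+n2}. \<forall>x\<in>U. \<forall>y\<in>V.
    warped_pair g1 g2 f (warped_coords p u f b \<phi> v a) (warped_coords p u f b \<phi> v c) x y
      = block_matrix p G1 G2 a c
        - K1 * warped_coords p u f b \<phi> v a (x, y) * warped_coords p u f b \<phi> v c (x, y)"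

proof (intro ballI)
  fix a c x y assume a: "a \<in> {1..p+n2}" and c: "c \<in> {1..p+n2}" and x: "x \<in> U" and y: "y \<in> V"
  have oU: "open U" and sym1: "transpose (g1 x) = g1 x"
    using curv1 x unfolding constant_curvature_def contravariant_metric_def by auto
  have sym2: "transpose (g2 y) = g2 y"
    using flat2 y unfolding flat_def constant_curvature_def contravariant_metric_def by auto
  have sm: "smooth_on S h \<Longrightarrow> z \<in> S \<Longrightarrow> h differentiable at z" for S h and z :: "real^'n::finite"
    unfolding smooth_on_def by (metis partials_iter.simps(1))
  have du: "i \<in> {1..p} \<Longrightarrow> u i differentiable at x" for i using sm u_smooth x by blast
  have df: "f differentiable at x" using sm f_smooth x by blast
  have dphi: "\<phi> differentiable at y" using sm phi_smooth y by blast
  have dv: "k \<in> {1..n2} \<Longrightarrow> v k differentiable at y" for k using sm v_smooth y by blast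
  have Df: "dcov f x = dcov (u 1) x"
    by (rule dcov_local[OF oU x]) (use f_u1 du p_pos in auto)
  have gram: "i \<in> {1..p} \<Longrightarrow> j \<in> {1..p} \<Longrightarrow> pair_cov g1 x (dcov (u i) x) (dcov (u j) x) = G1 i j - K1 * u i x * u j x" for i j
    using u_gram x by blast
  have G1sym: "i \<in> {1..p} \<Longrightarrow> j \<in> {1..p} \<Longrightarrow> G1 i j = G1 j i" for i j
    using gram[of i j] gram[of j i] pair_sym[of g1 x, OF sym1] by (simp add: mult.commute)
  have u1: "u 1 x = f x" using f_u1 x by simp
  have G11: "G1 1 1 = 0" proof -
    have "pair_cov g1 x (dcov f x) (dcov f x) = - K1 * (f x)^2" using f_norm x by blast
    then show ?thesis using gram[of 1 1] Df u1 p_pos by (simp add: power2_eq_square)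
  qed
  have p2: "p \<noteq> 1" using G11 G1_1p b_nz by auto
  have Gp1: "G1 p 1 = b" using G1sym[of p 1] G1_1p p_pos by simp
  have G1a: "1 \<le> i \<Longrightarrow> i < p \<Longrightarrow> G1 1 i = 0" for i using G1_row by auto
  have Ga1: "1 \<le> i \<Longrightarrow> i < p \<Longrightarrow> G1 i 1 = 0" for i using G1_row G1sym[of i 1] p_pos by auto
  have vg: "k \<in> {1..n2} \<Longrightarrow> m \<in> {1..n2} \<Longrightarrow> pair_cov g2 y (dcov (v k) y) (dcov (v m) y) = G2 k m" for k m
    using v_gram y by blast
  have pv: "k \<in> {1..n2} \<Longrightarrow> pair_cov g2 y (dcov \<phi> y) (dcov (v k) y) = v k y" for k using phi_v y by blast
  have vp: "k \<in> {1..n2} \<Longrightarrow> pair_cov g2 y (dcov (v k) y) (dcov \<phi> y) = v k y" for k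
    using pv pair_sym[of g2 y, OF sym2] by metis
  have pp: "pair_cov g2 y (dcov \<phi> y) (dcov \<phi> y) = 2 * \<phi> y" using phi_norm y by blast
  have dUw: "dU (warped_coords p u f b \<phi> v a) x y = (if a < p then dcov (u a) x else if a = p then
      dcov (u p) x - (b * \<phi> y) *\<^sub>R dcov (u 1) x else v (a - p) y *\<^sub>R dcov (u 1) x)" for a
  proof -
    have e1: "(\<lambda>z. u p z - b * f z * \<phi> y) = (\<lambda>z. 1 * u p z + (-(b * \<phi> y)) * f z)" by (auto simp: fun_eq_iff)
    have e2: "(\<lambda>z. f z * v (a - p) y) = (\<lambda>z. v (a - p) y * f z)" by (auto simp: fun_eq_iff)
    consider "a < p" | "a = p" | "a > p" by linarith
    then show ?thesis
    proof cases
      case 1 then show ?thesis unfolding dU_def warped_coords_def by simp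
    next
      case 2
      have "dU (warped_coords p u f b \<phi> v a) x y = dcov (\<lambda>z. u p z - b * f z * \<phi> y) x"
        unfolding dU_def warped_coords_def using 2 by simp
      also have "\<dots> = dcov (\<lambda>z. 1 * u p z + (-(b * \<phi> y)) * f z) x" by (simp only: e1)
      also have "\<dots> = dcov (u p) x - (b * \<phi> y) *\<^sub>R dcov (u 1) x"
        using dcov_lin[OF du[of p] df, of 1 "-(b * \<phi> y)"] p_pos Df by simp
      finally show ?thesis using 2 by simp
    next
      case 3
      have "dU (warped_coords p u f b \<phi> v a) x y = dcov (\<lambda>z. f z * v (a - p) y) x"
        unfolding dU_def warped_coords_def using 3 by simp
      also have "\<dots> = v (a - p) y *\<^sub>R dcov (u 1) x"
        unfolding e2 dcov_scale[OF df] Df ..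
      finally show ?thesis using 3 by simp
    qed
  qed
  have dVw: "dV (warped_coords p u f b \<phi> v a) x y = (if a < p then 0 else if a = p then
      (-(b * f x)) *\<^sub>R dcov \<phi> y else f x *\<^sub>R dcov (v (a - p)) y)" if ae: "a \<le> p + n2" for a
  proof -
    have e1: "(\<lambda>z. u p x - b * f x * \<phi> z) = (\<lambda>z. 1 * (\<lambda>_. u p x) z + (-(b * f x)) * \<phi> z)" by (auto simp: fun_eq_iff)
    have e2: "(\<lambda>z. f x * v (a - p) z) = (\<lambda>z. f x * v (a - p) z)" ..
    consider "a < p" | "a = p" | "a > p" by linarith
    then show ?thesis
    proof cases
      case 1 then show ?thesis unfolding dV_def warped_coords_def by (simp add: dcov_const)
    next
      case 2
      have "dV (warped_coords p u f b \<phi> v a) x y = dcov (\<lambda>z. u p x - b * f x * \<phi> z) y"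
        unfolding dV_def warped_coords_def using 2 by simp
      also have "\<dots> = dcov (\<lambda>z. 1 * (\<lambda>_. u p x) z + (-(b * f x)) * \<phi> z) y" by (simp only: e1)
      also have "\<dots> = (-(b * f x)) *\<^sub>R dcov \<phi> y"
        using dcov_lin[OF _ dphi, of "\<lambda>_. u p x" 1 "-(b * f x)"] by (simp add: dcov_const)
      finally show ?thesis using 2 by simp
    next
      case 3
      have "dV (warped_coords p u f b \<phi> v a) x y = dcov (\<lambda>z. f x * v (a - p) z) y"
        unfolding dV_def warped_coords_def using 3 by simp
      also have "\<dots> = f x *\<^sub>R dcov (v (a - p)) y"
        by (rule dcov_scale[OF dv]) (use 3 ae in auto)
      finally show ?thesis using 3 by simp
    qed
  qed
  show "warped_pair g1 g2 f (warped_coords p u f b \<phi> v a) (warped_coords p u f b \<phi> v c) x y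
      = block_matrix p G1 G2 a c
        - K1 * warped_coords p u f b \<phi> v a (x, y) * warped_coords p u f b \<phi> v c (x, y)"
  proof -
    have an: "a \<le> p + n2" "1 \<le> a" and cn: "c \<le> p + n2" "1 \<le> c" using a c by auto
    have fx: "f x \<noteq> 0" using f_nz x by blast
    note ps = pair_simps gram vg pv vp pp G1a Ga1 Gp1 G1_1p G11 u1 Df[symmetric]
    have u1': "u (Suc 0) x = f x" and Ga1': "\<And>i. 1 \<le> i \<Longrightarrow> i < p \<Longrightarrow> G1 i (Suc 0) = 0"
      and G1a': "\<And>i. 1 \<le> i \<Longrightarrow> i < p \<Longrightarrow> G1 (Suc 0) i = 0" and Gp1': "G1 p (Suc 0) = b"
      and G1p': "G1 (Suc 0) p = b"
      using u1 Ga1 G1a Gp1 G1_1p by auto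
    have pvc: "p < c \<Longrightarrow> pair_cov g2 y (dcov \<phi> y) (dcov (v (c - p)) y) = v (c - p) y"
      using pv[of "c - p"] cn by (simp add: le_diff_conv)
    have vpa: "p < a \<Longrightarrow> pair_cov g2 y (dcov (v (a - p)) y) (dcov \<phi> y) = v (a - p) y"
      using vp[of "a - p"] an by (simp add: le_diff_conv)
    have vgac: "p < a \<Longrightarrow> p < c \<Longrightarrow> pair_cov g2 y (dcov (v (a - p)) y) (dcov (v (c - p)) y) = G2 (a - p) (c - p)"
      using vg[of "a - p" "c - p"] an cn by (simp add: le_diff_conv)
    have pd1: "pair_cov g1 x (dcov (u 1) x) (dcov (u 1) x) = - K1 * f x * f x"
      using gram[of 1 1] G11 u1 p_pos by simp
    hence pd1': "pair_cov g1 x (dcov (u (Suc 0)) x) (dcov (u (Suc 0)) x) = - K1 * f x * f x" by simp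
    consider "a < p" | "a = p" | "a > p" by linarith
    then show ?thesis
    proof cases
      case 1
      consider "c < p" | "c = p" | "c > p" by linarith
      then show ?thesis
      proof cases
        case 1 then show ?thesis using \<open>a < p\<close> an cn unfolding warped_pair_def dUw dVw[OF an(1)] dVw[OF cn(1)]
          by (simp add: pair_simps gram u1' Ga1' G1a' Gp1' G1p' block_matrix_def warped_coords_def)
      next
        case 2 then show ?thesis using \<open>a < p\<close> an cn p2 unfolding warped_pair_def dUw dVw[OF an(1)] dVw[OF cn(1)]
          by (simp add: pair_simps gram Ga1 u1' Ga1' G1a' Gp1' G1p' block_matrix_def warped_coords_def algebra_simps)
      next
        case 3 then show ?thesis using \<open>a < p\<close> an cn p2 unfolding warped_pair_def dUw dVw[OF an(1)] dVw[OF cn(1)]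
          by (simp add: pair_simps gram Ga1 u1 u1' Ga1' G1a' Gp1' G1p' block_matrix_def warped_coords_def algebra_simps)
      qed
    next
      case 2
      consider "c < p" | "c = p" | "c > p" by linarith
      then show ?thesis
      proof cases
        case 1 then show ?thesis using \<open>a = p\<close> an cn p2 unfolding warped_pair_def dUw dVw[OF an(1)] dVw[OF cn(1)]
          by (simp add: pair_simps gram G1a u1' Ga1' G1a' Gp1' G1p' block_matrix_def warped_coords_def algebra_simps)
      next
        case 2 then show ?thesis using \<open>a = p\<close> an cn p2 fx unfolding warped_pair_def dUw dVw[OF an(1)] dVw[OF cn(1)]
          by (simp add: pair_simps gram Gp1 G1_1p pd1 pd1' u1 pp u1' Ga1' G1a' Gp1' G1p' block_matrix_def warped_coords_def algebra_simps power2_eq_square)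
      next
        case 3 then show ?thesis using \<open>a = p\<close> an cn p2 fx unfolding warped_pair_def dUw dVw[OF an(1)] dVw[OF cn(1)]
          by (simp add: pair_simps gram Gp1 G1_1p pd1 pd1' u1 pvc[OF \<open>p < c\<close>] u1' Ga1' G1a' Gp1' G1p' block_matrix_def warped_coords_def algebra_simps power2_eq_square)
      qed
    next
      case 3
      consider "c < p" | "c = p" | "c > p" by linarith
      then show ?thesis
      proof cases
        case 1 then show ?thesis using \<open>a > p\<close> an cn p2 unfolding warped_pair_def dUw dVw[OF an(1)] dVw[OF cn(1)]
          by (simp add: pair_simps gram G1a u1 u1' Ga1' G1a' Gp1' G1p' block_matrix_def warped_coords_def algebra_simps)
      next
        case 2 then show ?thesis using \<open>a > p\<close> an cn p2 fx unfolding warped_pair_def dUw dVw[OF an(1)] dVw[OF cn(1)]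
          by (simp add: pair_simps gram Gp1 G1_1p pd1 pd1' u1 vpa[OF \<open>p < a\<close>] u1' Ga1' G1a' Gp1' G1p' block_matrix_def warped_coords_def algebra_simps power2_eq_square)
      next
        case 3 then show ?thesis using \<open>a > p\<close> an cn p2 fx unfolding warped_pair_def dUw dVw[OF an(1)] dVw[OF cn(1)]
          by (simp add: pair_simps pd1 pd1' vgac[OF \<open>p < a\<close> \<open>p < c\<close>] u1' Ga1' G1a' Gp1' G1p' block_matrix_def warped_coords_def algebra_simps power2_eq_square)
      qed
    qed
  qed
qed

end
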